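(* Let $k\ge 1$ and let $\mathcal{M}=\{q_1,\dots,q_k\}$ be a finite set of odd primes. Then there exists $n_{\mathcal{M}}\in\mathbb{N}$ such that for every integer $N\ge n_{\mathcal{M}}$ there exists a sequence of $N$ consecutive integers $a, a+1,\dots,a+N-1$ such that no member of the sequence is relatively prime to the product of all the other members. Moreover, for each member $x$ of the sequence, the greatest common divisor of $x$ and the product of all the other members is divisible by some prime $p$ with $p\notin\mathcal{M}$. *)

theory Defs
  imports "HOL-Computational_Algebra.Primes"
begin

end

theory Submission
  imports Defs "HOL-Number_Theory.Number_Theory" "HOL.Binomial_Plus" "HOL-Library.FuncSet"
begin

lemma poly_exp_lim: "((\<lambda>m::nat. real m ^ d / 2 ^ m) \<longlongrightarrow> 0) sequentially"
proof -
  have l2: "ln (2::real) > 0" by simp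
  have f: "filterlim (\<lambda>m::nat. ln 2 * real m) at_top sequentially"
    by (intro filterlim_tendsto_pos_mult_at_top[OF tendsto_const l2] filterlim_real_sequentially)
  have "((\<lambda>m::nat. (ln 2 * real m) ^ d / exp (ln 2 * real m)) \<longlongrightarrow> 0) sequentially"
    by (rule filterlim_compose[OF tendsto_power_div_exp_0 f])
  hence "((\<lambda>m::nat. ((ln 2 * real m) ^ d / exp (ln 2 * real m)) / ln 2 ^ d) \<longlongrightarrow> 0 / ln 2 ^ d) sequentially"
    by (intro tendsto_divide tendsto_const) auto
  moreover have "\<And>m. ((ln 2 * real m) ^ d / exp (ln 2 * real m)) / ln 2 ^ d = real m ^ d / 2 ^ m"
  proof -
    fix m
    have e: "exp (ln 2 * real m) = 2 ^ m"
      by (metis exp_ln exp_of_nat_mult mult.commute zero_less_numeral)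
    show "((ln 2 * real m) ^ d / exp (ln 2 * real m)) / ln 2 ^ d = real m ^ d / 2 ^ m"
      using l2 by (simp add: e power_mult_distrib)
  qed
  ultimately show ?thesis by simp
qed

lemma poly_exp: "\<exists>m0. \<forall>m\<ge>m0. c * m ^ d \<le> (2::nat) ^ m"
proof -
  have "\<forall>\<^sub>F m in sequentially. real m ^ d / 2 ^ m < 1 / (real c + 1)"
    using order_tendstoD(2)[OF poly_exp_lim[of d], of "1 / (real c + 1)"] by simp
  then obtain m0 where m0: "\<And>m. m \<ge> m0 \<Longrightarrow> real m ^ d / 2 ^ m < 1 / (real c + 1)"
    by (auto simp: eventually_sequentially)
  have "c * m ^ d \<le> 2 ^ m" if "m \<ge> m0" for m
  proof -
    have "real m ^ d / 2 ^ m < 1 / (real c + 1)" using m0 that .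
    hence "real m ^ d * (real c + 1) < 2 ^ m"
      by (simp add: field_simps)
    hence "real m ^ d + real c * real m ^ d < 2 ^ m" by (simp add: algebra_simps)
    moreover have "real m ^ d \<ge> 0" by simp
    ultimately have "real c * real m ^ d \<le> 2 ^ m"
      by linarith
    hence "real (c * m ^ d) \<le> real (2 ^ m)" by simp
    thus ?thesis by linarith
  qed
  thus ?thesis by blast
qed

lemma mult_card:
  fixes p x K :: nat
  assumes p: "prime p" and x: "x > 0" and K: "multiplicity p x \<le> K"
  shows "card {i\<in>{1..K}. p ^ i dvd x} = multiplicity p x"
proof -
  have nu: "\<not> is_unit p" using p by (metis not_prime_unit)
  have "{i\<in>{1..K}. p ^ i dvd x} = {1..multiplicity p x}"
  proof (rule Set.set_eqI)
    fix i
    have "p ^ i dvd x \<longleftrightarrow> i \<le> multiplicity p x"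
      using power_dvd_iff_le_multiplicity[of x p i] x nu by simp
    thus "i \<in> {i\<in>{1..K}. p ^ i dvd x} \<longleftrightarrow> i \<in> {1..multiplicity p x}" using K by auto
  qed
  thus ?thesis by simp
qed

lemma mult_le_self:
  fixes p x :: nat
  assumes p: "prime p" and x: "x > 0"
  shows "multiplicity p x \<le> x"
proof -
  have "p ^ multiplicity p x dvd x" by (rule multiplicity_dvd)
  hence "p ^ multiplicity p x \<le> x" using x by (rule dvd_imp_le)
  moreover have "multiplicity p x < 2 ^ multiplicity p x" by (rule less_exp)
  moreover have "2 ^ multiplicity p x \<le> p ^ multiplicity p x"
    using prime_ge_2_nat[OF p] by (rule power_mono) simp
  ultimately show ?thesis by linarith
qed

lemma Suc_div_split: "(0::nat) < q \<Longrightarrow> Suc m div q = m div q + (if q dvd Suc m then 1 else 0)"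
  by (simp add: div_Suc dvd_eq_mod_eq_0)

lemma legendre:
  fixes p m :: nat
  assumes p: "prime p"
  shows "multiplicity p (fact m) = (\<Sum>i\<in>{1..m}. m div p ^ i)"
proof (induction m)
  case 0
  then show ?case by simp
next
  case (Suc m)
  have p0: "p > 0" using prime_gt_0_nat[OF p] .
  have ext: "(\<Sum>i\<in>{1..m}. m div p ^ i) = (\<Sum>i\<in>{1..Suc m}. m div p ^ i)"
  proof -
    have "m < 2 ^ m" by (rule less_exp)
    also have "(2::nat) ^ m \<le> 2 ^ Suc m" by simp
    finally have "m < 2 ^ Suc m" .
    also have "(2::nat) ^ Suc m \<le> p ^ Suc m" using prime_ge_2_nat[OF p] by (rule power_mono) simp
    finally have "m div p ^ Suc m = 0" by simp
    thus ?thesis by simp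
  qed
  have "multiplicity p (fact (Suc m) :: nat) = multiplicity p (Suc m * fact m)"
    by simp
  also have "\<dots> = multiplicity p (Suc m) + multiplicity p (fact m :: nat)"
    using p by (intro prime_elem_multiplicity_mult_distrib) auto
  also have "multiplicity p (Suc m) = card {i\<in>{1..Suc m}. p ^ i dvd Suc m}"
  proof -
    have "multiplicity p (Suc m) \<le> Suc m" by (rule mult_le_self[OF p]) simp
    thus ?thesis by (intro mult_card[OF p, symmetric]) simp_all
  qed
  also have "\<dots> = (\<Sum>i\<in>{1..Suc m}. (if p ^ i dvd Suc m then 1 else 0))"
    using sum.inter_filter[of "{1..Suc m}" "\<lambda>_. 1::nat" "\<lambda>i. p ^ i dvd Suc m"] by simp
  finally have A: "multiplicity p (fact (Suc m) :: nat) = (\<Sum>i\<in>{1..Suc m}. (if p ^ i dvd Suc m then 1 else 0)) + (\<Sum>i\<in>{1..Suc m}. m div p ^ i)"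
    using Suc.IH ext by simp
  have "(\<Sum>i\<in>{1..Suc m}. Suc m div p ^ i) = (\<Sum>i\<in>{1..Suc m}. m div p ^ i + (if p ^ i dvd Suc m then 1 else 0))"
    by (rule sum.cong[OF refl]) (rule Suc_div_split, simp add: p0)
  also have "\<dots> = (\<Sum>i\<in>{1..Suc m}. m div p ^ i) + (\<Sum>i\<in>{1..Suc m}. (if p ^ i dvd Suc m then 1 else 0))"
    by (rule sum.distrib)
  finally show ?case using A by simp
qed

lemma legendre_ext:
  fixes p m K :: nat
  assumes p: "prime p" and K: "m \<le> K"
  shows "multiplicity p (fact m) = (\<Sum>i\<in>{1..K}. m div p ^ i)"
proof -
  have "(\<Sum>i\<in>{1..m}. m div p ^ i) = (\<Sum>i\<in>{1..K}. m div p ^ i)"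
  proof (rule sum.mono_neutral_left)
    show "\<forall>i\<in>{1..K} - {1..m}. m div p ^ i = 0"
    proof
      fix i assume "i \<in> {1..K} - {1..m}"
      hence i: "m < i" by auto
      have "m < 2 ^ i" using i less_exp[of m] by (meson less_exp less_trans)
      also have "(2::nat) ^ i \<le> p ^ i" using prime_ge_2_nat[OF p] by (rule power_mono) simp
      finally show "m div p ^ i = 0" by simp
    qed
  qed (use K in auto)
  thus ?thesis using legendre[OF p] by simp
qed

lemma term_le1: "(0::nat) < q \<Longrightarrow> (2*n) div q \<le> 2*(n div q) + 1"
proof -
  assume q: "0 < q"
  have "n mod q < q" using q by simp
  moreover have "n div q * q + n mod q = n" by (rule div_mult_mod_eq)
  moreover have "(n div q + 1) * q = n div q * q + q" by (simp add: algebra_simps)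
  ultimately have "n < (n div q + 1) * q" by linarith
  hence "2*n < (2*(n div q) + 2) * q" by (simp add: algebra_simps)
  hence "(2*n) div q < 2*(n div q) + 2" using q by (simp add: div_less_iff_less_mult)
  thus ?thesis by simp
qed

lemma term_ge: "2*(n div q) \<le> (2*n) div (q::nat)"
proof (cases "q = 0")
  case True thus ?thesis by simp
next
  case False
  have "n div q * q \<le> n" by (rule div_times_less_eq_dividend)
  hence "2 * (n div q * q) \<le> 2*n" by (rule mult_le_mono2)
  hence "(2*(n div q)) * q \<le> 2*n" by (simp only: mult.assoc)
  thus ?thesis using False by (simp add: less_eq_div_iff_mult_less_eq)
qed

lemma vC:
  fixes p n :: nat
  assumes p: "prime p"
  shows "multiplicity p ((2*n) choose n) = (\<Sum>i\<in>{1..2*n}. (2*n) div p^i - 2*(n div p^i))"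
proof -
  have fe: "fact n * fact n * ((2*n) choose n) = (fact (2*n) :: nat)"
    using binomial_fact_lemma[of n "2*n"] by simp
  have C0: "((2*n) choose n) \<noteq> 0" by simp
  have "multiplicity p (fact (2*n) :: nat) = multiplicity p (fact n * fact n * ((2*n) choose n) :: nat)"
    by (simp only: fe)
  also have "\<dots> = multiplicity p (fact n :: nat) + multiplicity p (fact n :: nat) + multiplicity p ((2*n) choose n)"
  proof -
    have pe: "prime_elem p" using p by simp
    have f0: "(fact n :: nat) \<noteq> 0" by simp
    show ?thesis
      using prime_elem_multiplicity_mult_distrib[OF pe, of "fact n * fact n" "(2*n) choose n"]
            prime_elem_multiplicity_mult_distrib[OF pe f0 f0] C0 f0 by simp
  qed
  finally have eq: "(\<Sum>i\<in>{1..2*n}. (2*n) div p^i) = 2 * (\<Sum>i\<in>{1..2*n}. n div p^i) + multiplicity p ((2*n) choose n)"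
    using legendre_ext[OF p, of "2*n" "2*n"] legendre_ext[OF p, of n "2*n"] by simp
  have "(\<Sum>i\<in>{1..2*n}. (2*n) div p^i - 2*(n div p^i)) = (\<Sum>i\<in>{1..2*n}. (2*n) div p^i) - (\<Sum>i\<in>{1..2*n}. 2*(n div p^i))"
    by (rule sum_subtractf_nat) (simp add: term_ge)
  also have "(\<Sum>i\<in>{1..2*n}. 2*(n div p^i)) = 2 * (\<Sum>i\<in>{1..2*n}. n div p^i)"
    by (simp add: sum_distrib_left)
  finally show ?thesis using eq by simp
qed

lemma vC_le_card:
  fixes p n :: nat
  assumes p: "prime p"
  shows "multiplicity p ((2*n) choose n) \<le> card {i\<in>{1..2*n}. p ^ i \<le> 2*n}"
proof -
  have p0: "p ^ i > 0" for i using prime_gt_0_nat[OF p] by simp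
  have "multiplicity p ((2*n) choose n) = (\<Sum>i\<in>{1..2*n}. (2*n) div p^i - 2*(n div p^i))"
    by (rule vC[OF p])
  also have "\<dots> \<le> (\<Sum>i\<in>{1..2*n}. if p ^ i \<le> 2*n then 1 else 0)"
  proof (rule sum_mono)
    fix i assume "i \<in> {1..2*n}"
    show "(2*n) div p^i - 2*(n div p^i) \<le> (if p ^ i \<le> 2*n then 1 else 0)"
    proof (cases "p ^ i \<le> 2*n")
      case True thus ?thesis using term_le1[OF p0[of i], of n] by simp
    next
      case False thus ?thesis by simp
    qed
  qed
  also have "\<dots> = card {i\<in>{1..2*n}. p ^ i \<le> 2*n}"
    using sum.inter_filter[of "{1..2*n}" "\<lambda>_. 1::nat" "\<lambda>i. p ^ i \<le> 2*n"] by simp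
  finally show ?thesis .
qed

lemma vC_pow_le:
  fixes p n :: nat
  assumes p: "prime p" and n: "n \<ge> 1"
  shows "p ^ multiplicity p ((2*n) choose n) \<le> 2*n"
proof (rule ccontr)
  let ?v = "multiplicity p ((2*n) choose n)"
  assume "\<not> p ^ ?v \<le> 2*n"
  hence big: "2*n < p ^ ?v" by simp
  have p1: "1 < p" using prime_gt_1_nat[OF p] .
  have "{i\<in>{1..2*n}. p ^ i \<le> 2*n} \<subseteq> {1..<?v}"
  proof
    fix i assume "i \<in> {i\<in>{1..2*n}. p ^ i \<le> 2*n}"
    hence i1: "1 \<le> i" and "p ^ i \<le> 2*n" by auto
    have "p ^ i < p ^ ?v" using \<open>p ^ i \<le> 2*n\<close> big by (rule le_less_trans)
    hence "i < ?v" by (rule power_less_imp_less_exp[OF p1])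
    thus "i \<in> {1..<?v}" using i1 by simp
  qed
  hence "card {i\<in>{1..2*n}. p ^ i \<le> 2*n} \<le> card {1..<?v}" by (intro card_mono) auto
  hence "?v \<le> ?v - 1" using vC_le_card[OF p, of n] by simp
  hence "?v = 0" by simp
  thus False using big n by simp
qed

lemma vC_le1:
  fixes p n :: nat
  assumes p: "prime p" and pp: "2*n < p*p"
  shows "multiplicity p ((2*n) choose n) \<le> 1"
proof -
  have "{i\<in>{1..2*n}. p ^ i \<le> 2*n} \<subseteq> {1}"
  proof
    fix i assume i: "i \<in> {i\<in>{1..2*n}. p ^ i \<le> 2*n}"
    have "i < 2"
    proof (rule ccontr)
      assume "\<not> i < 2"
      hence "p ^ 2 \<le> p ^ i" using prime_gt_0_nat[OF p] by (intro power_increasing) auto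
      thus False using i pp by (simp add: power2_eq_square)
    qed
    thus "i \<in> {1}" using i by auto
  qed
  hence "card {i\<in>{1..2*n}. p ^ i \<le> 2*n} \<le> card {1::nat}" by (intro card_mono) auto
  thus ?thesis using vC_le_card[OF p, of n] by simp
qed

lemma vC_0:
  fixes p n :: nat
  assumes p: "prime p" and pp: "2*n < p*p" and pn: "p \<le> n" and n3: "2*n < 3*p"
  shows "multiplicity p ((2*n) choose n) = 0"
proof -
  have "(\<Sum>i\<in>{1..2*n}. (2*n) div p^i - 2*(n div p^i)) = 0"
  proof (rule sum.neutral, rule ballI)
    fix i assume i: "i \<in> {1..2*n}"
    show "(2*n) div p^i - 2*(n div p^i) = 0"
    proof (cases "i = 1")
      case True
      have "n div p = 1" using pn n3 by (intro div_nat_eqI) auto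
      moreover have "(2*n) div p = 2" using pn n3 by (intro div_nat_eqI) auto
      ultimately show ?thesis using True by simp
    next
      case False
      hence "i \<ge> 2" using i by auto
      hence "p ^ 2 \<le> p ^ i" using prime_gt_0_nat[OF p] by (intro power_increasing) auto
      hence "2*n < p ^ i" using pp by (simp add: power2_eq_square)
      thus ?thesis by simp
    qed
  qed
  thus ?thesis using vC[OF p, of n] by simp
qed

lemma prod_primes_dvd:
  fixes S :: "nat set"
  assumes "finite S" "\<forall>p\<in>S. prime p \<and> p dvd c"
  shows "(\<Prod>p\<in>S. p) dvd c"
  using assms
proof (induction S rule: finite_induct)
  case empty thus ?case by simp
next
  case (insert q S)
  have "coprime q (\<Prod>p\<in>S. p)"
  proof (rule prod_coprime_right)
    fix p assume "p \<in> S"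
    thus "coprime q p" using insert by (metis insertCI primes_coprime)
  qed
  thus ?case using insert by (simp add: divides_mult)
qed

lemma binom_odd_le: "(2*j+1) choose j \<le> 4 ^ j"
proof -
  have s: "(2*j+1) choose j = (2*j+1) choose (j+1)"
    using binomial_symmetric[of j "2*j+1"] by simp
  have "(\<Sum>k\<in>{j, j+1}. (2*j+1) choose k) \<le> (\<Sum>k\<le>2*j+1. (2*j+1) choose k)"
    by (intro sum_mono2) auto
  also have "\<dots> = 2 ^ (2*j+1)" by (rule choose_row_sum)
  finally have "2 * ((2*j+1) choose j) \<le> 2 * 4 ^ j"
    using s by (simp add: power_mult)
  thus ?thesis by simp
qed

lemma primorial_le: "(\<Prod>p\<in>{p. prime p \<and> p \<le> m}. p) \<le> (4::nat) ^ m"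
proof (induction m rule: less_induct)
  case (less m)
  show ?case
  proof (cases "m \<le> 2")
    case True
    have "{p::nat. prime p \<and> p \<le> m} \<subseteq> {2}"
    proof
      fix p assume "p \<in> {p::nat. prime p \<and> p \<le> m}"
      hence "prime p" "p \<le> m" by auto
      hence "2 \<le> p" "p \<le> 2" using prime_ge_2_nat True by auto
      thus "p \<in> {2}" by simp
    qed
    hence "{p::nat. prime p \<and> p \<le> m} = {} \<or> {p::nat. prime p \<and> p \<le> m} = {2}" by blast
    thus ?thesis
    proof
      assume e: "{p::nat. prime p \<and> p \<le> m} = {}"
      have "(\<Prod>p\<in>{p::nat. prime p \<and> p \<le> m}. p) = 1" unfolding e by simp
      thus ?thesis by simp
    next
      assume e: "{p::nat. prime p \<and> p \<le> m} = {2}"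
      hence "2 \<in> {p::nat. prime p \<and> p \<le> m}" by simp
      hence m2: "2 \<le> m" by simp
      have "(\<Prod>p\<in>{p::nat. prime p \<and> p \<le> m}. p) = 2" unfolding e by simp
      also have "(2::nat) \<le> 4 ^ 1" by simp
      also have "(4::nat) ^ 1 \<le> 4 ^ m" using m2 by (intro power_increasing) auto
      finally show ?thesis .
    qed
  next
    case False
    show ?thesis
    proof (cases "even m")
      case True
      have "\<not> prime m" using True False prime_odd_nat[of m] by auto
      have "{p. prime p \<and> p \<le> m} = {p. prime p \<and> p \<le> m - 1}"
      proof (rule Set.set_eqI)
        fix x show "x \<in> {p. prime p \<and> p \<le> m} \<longleftrightarrow> x \<in> {p. prime p \<and> p \<le> m - 1}"
          using \<open>\<not> prime m\<close> False by (cases "x = m") auto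
      qed
      hence "(\<Prod>p\<in>{p. prime p \<and> p \<le> m}. p) \<le> 4 ^ (m - 1)" using less[of "m-1"] False by simp
      also have "(4::nat) ^ (m - 1) \<le> 4 ^ m" by (intro power_increasing) auto
      finally show ?thesis .
    next
      case odd: False
      then obtain j where m: "m = 2*j+1" by (metis oddE)
      have j1: "j \<ge> 1" using \<open>\<not> m \<le> 2\<close> m by simp
      let ?A = "{p. prime p \<and> p \<le> j+1}"
      let ?B = "{p. prime p \<and> j+1 < p \<and> p \<le> 2*j+1}"
      have un: "{p. prime p \<and> p \<le> m} = ?A \<union> ?B" using m by auto
      have fA: "finite ?A" and fB: "finite ?B" by auto
      have eqAB: "(\<Prod>p\<in>{p. prime p \<and> p \<le> m}. p) = (\<Prod>p\<in>?A. p) * (\<Prod>p\<in>?B. p)"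
        unfolding un by (rule prod.union_disjoint[OF fA fB]) auto
      have hA: "(\<Prod>p\<in>?A. p) \<le> 4 ^ (j+1)" using less[of "j+1"] m j1 by simp
      have hB: "(\<Prod>p\<in>?B. p) \<le> 4 ^ j"
      proof -
        have fe: "fact j * fact (j+1) * ((2*j+1) choose j) = (fact (2*j+1) :: nat)"
          using binomial_fact_lemma[of j "2*j+1"] by (simp add: Suc_diff_le)
        have "\<forall>p\<in>?B. prime p \<and> p dvd ((2*j+1) choose j)"
        proof
          fix p assume pB: "p \<in> ?B"
          hence pp: "prime p" by simp
          have "p \<le> 2*j+1" using pB by simp
          hence "p dvd (fact (2*j+1) :: nat)" using prime_dvd_fact_iff[OF pp, of "2*j+1"] by (simp only:)
          hence "p dvd fact j * fact (j+1) * ((2*j+1) choose j)" using fe by simp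
          moreover have nj: "\<not> p \<le> j" "\<not> p \<le> j+1" using pB by auto
          moreover have "\<not> p dvd (fact j :: nat)" "\<not> p dvd (fact (j+1) :: nat)"
            using nj prime_dvd_fact_iff[OF pp] by metis+
          ultimately show "prime p \<and> p dvd ((2*j+1) choose j)"
            using pp by (auto simp: prime_dvd_mult_iff)
        qed
        hence "(\<Prod>p\<in>?B. p) dvd ((2*j+1) choose j)" by (intro prod_primes_dvd fB)
        hence "(\<Prod>p\<in>?B. p) \<le> (2*j+1) choose j" by (intro dvd_imp_le) auto
        also have "\<dots> \<le> 4 ^ j" by (rule binom_odd_le)
        finally show ?thesis .
      qed
      have "(4::nat) ^ (j+1) * 4 ^ j = 4 ^ m" using m by (simp add: power_add[symmetric])
      thus ?thesis using eqAB mult_le_mono[OF hA hB] by simp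
    qed
  qed
qed

lemma cheb:
  fixes n B T :: nat
  assumes n5: "n \<ge> 5" and B: "2*n < 2^B" and T: "2*n < T*T"
  shows "2*n \<le> 3*B*(1 + T + card {p. prime p \<and> n < p \<and> p \<le> 2*n})"
proof -
  define C where "C = (2*n) choose n"
  define P where "P = card {p. prime p \<and> n < p \<and> p \<le> 2*n}"
  define v where "v = (\<lambda>p. multiplicity p C)"
  define F where "F = prime_factors C"
  have C0: "C \<noteq> 0" unfolding C_def by simp
  have fe: "fact n * fact n * C = (fact (2*n) :: nat)"
    using binomial_fact_lemma[of n "2*n"] unfolding C_def by simp
  have CF: "C = (\<Prod>p\<in>F. p ^ v p)"
    using prod_prime_factors[OF C0] unfolding F_def v_def by simp
  have finF: "finite F" unfolding F_def by simp
  have Fprime: "\<And>p. p \<in> F \<Longrightarrow> prime p \<and> p dvd C" unfolding F_def using C0 by (auto simp: in_prime_factors_iff)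
  have Fle: "p \<le> 2*n" if "p \<in> F" for p
  proof -
    have "p dvd C" "prime p" using Fprime[OF that] by auto
    hence "p dvd (fact (2*n) :: nat)" using fe by (metis dvd_mult dvd_trans dvd_refl)
    thus ?thesis using prime_dvd_fact_iff[OF \<open>prime p\<close>] by simp
  qed
  define F1 where "F1 = {p\<in>F. p*p \<le> 2*n}"
  define F2 where "F2 = {p\<in>F. 2*n < p*p}"
  have "F = F1 \<union> F2" unfolding F1_def F2_def by auto
  hence "C = (\<Prod>p\<in>F1. p ^ v p) * (\<Prod>p\<in>F2. p ^ v p)"
  proof -
    have "finite F1" "finite F2" using finF by (auto simp: F1_def F2_def)
    moreover have "F1 \<inter> F2 = {}" by (auto simp: F1_def F2_def)
    ultimately have "(\<Prod>p\<in>F1 \<union> F2. p ^ v p) = (\<Prod>p\<in>F1. p ^ v p) * (\<Prod>p\<in>F2. p ^ v p)"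
      by (rule prod.union_disjoint)
    thus ?thesis using CF \<open>F = F1 \<union> F2\<close> by simp
  qed
  have P1: "(\<Prod>p\<in>F1. p ^ v p) \<le> (2*n) ^ T"
  proof -
    have "(\<Prod>p\<in>F1. p ^ v p) \<le> (\<Prod>p\<in>F1. 2*n)"
    proof (rule prod_mono)
      fix p assume "p \<in> F1"
      hence pp: "prime p" using Fprime by (auto simp: F1_def)
      show "0 \<le> p ^ v p \<and> p ^ v p \<le> 2*n" using vC_pow_le[OF pp, of n] n5 unfolding v_def C_def by simp
    qed
    also have "\<dots> = (2*n) ^ card F1" by simp
    also have "card F1 \<le> T"
    proof -
      have "F1 \<subseteq> {..<T}"
      proof
        fix p assume "p \<in> F1"
        hence "p*p < T*T" using T by (auto simp: F1_def)
        thus "p \<in> {..<T}" by (metis lessThan_iff mult_le_mono not_le)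
      qed
      thus ?thesis by (metis card_lessThan card_mono finite_lessThan)
    qed
    hence "(2*n) ^ card F1 \<le> (2*n) ^ T" using n5 by (intro power_increasing) auto
    finally show ?thesis .
  qed
  have P2: "(\<Prod>p\<in>F2. p ^ v p) \<le> 4 ^ (2*n div 3) * (2*n) ^ P"
  proof -
    let ?A = "{p. prime p \<and> p \<le> 2*n div 3}"
    let ?B = "{p. prime p \<and> n < p \<and> p \<le> 2*n}"
    have "(\<Prod>p\<in>F2. p ^ v p) = (\<Prod>p\<in>F2. p)"
    proof (rule prod.cong[OF refl])
      fix p assume p: "p \<in> F2"
      hence pp: "prime p" and pd: "p dvd C" and sq: "2*n < p*p" using Fprime by (auto simp: F2_def)
      have "v p \<le> 1" unfolding v_def C_def using vC_le1[OF pp sq] .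
      moreover have "v p \<ge> 1" unfolding v_def
        using pd C0 pp power_dvd_iff_le_multiplicity[of C p 1] prime_gt_1_nat[OF pp] by auto
      ultimately have "v p = 1" by simp
      thus "p ^ v p = p" by simp
    qed
    also have "\<dots> \<le> (\<Prod>p\<in>?A \<union> ?B. p)"
    proof (rule dvd_imp_le)
      have "F2 \<subseteq> ?A \<union> ?B"
      proof
        fix p assume p: "p \<in> F2"
        hence pp: "prime p" and pd: "p dvd C" and sq: "2*n < p*p" and pF: "p \<in> F" using Fprime by (auto simp: F2_def)
        have "p \<le> 2*n" using Fle[OF pF] .
        moreover have "p \<le> 2*n div 3" if "p \<le> n"
        proof (rule ccontr)
          assume "\<not> p \<le> 2*n div 3"
          hence "2*n < 3*p" by linarith
          hence "v p = 0" unfolding v_def C_def using vC_0[OF pp sq that] by simp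
          moreover have "v p \<ge> 1" unfolding v_def
            using pd C0 pp power_dvd_iff_le_multiplicity[of C p 1] prime_gt_1_nat[OF pp] by auto
          ultimately show False by simp
        qed
        ultimately show "p \<in> ?A \<union> ?B" using pp by auto
      qed
      thus "(\<Prod>p\<in>F2. p) dvd (\<Prod>p\<in>?A \<union> ?B. p)" by (intro prod_dvd_prod_subset) auto
    qed (auto intro: prime_gt_0_nat)
    also have "\<dots> = (\<Prod>p\<in>?A. p) * (\<Prod>p\<in>?B. p)"
      by (rule prod.union_disjoint) auto
    finally have e1: "(\<Prod>p\<in>F2. p ^ v p) \<le> (\<Prod>p\<in>?A. p) * (\<Prod>p\<in>?B. p)" .
    have e3: "(\<Prod>p\<in>?A. p) \<le> 4 ^ (2*n div 3)" by (rule primorial_le)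
    have "(\<Prod>p\<in>?B. p) \<le> (\<Prod>p\<in>?B. 2*n)" by (intro prod_mono) auto
    also have "\<dots> = (2*n) ^ P" unfolding P_def by simp
    finally have e4: "(\<Prod>p\<in>?B. p) \<le> (2*n) ^ P" .
    show ?thesis using e1 mult_le_mono[OF e3 e4] by (rule le_trans)
  qed
  have low: "4 ^ n \<le> C * (2*n)"
  proof -
    have "4^n / (2*real n) \<le> real C" unfolding C_def using central_binomial_lower_bound[of n] n5 by simp
    hence "4^n \<le> real C * (2 * real n)" using n5 by (simp add: field_simps)
    hence "real (4^n) \<le> real (C * (2*n))" by simp
    thus ?thesis by (simp only: of_nat_le_iff)
  qed
  have "C \<le> (2*n) ^ T * (4 ^ (2*n div 3) * (2*n) ^ P)"
    using \<open>C = _ * _\<close> mult_le_mono[OF P1 P2] by simp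
  hence "4 ^ n \<le> (2*n) ^ T * (4 ^ (2*n div 3) * (2*n) ^ P) * (2*n)"
    using low by (meson le_trans mult_le_mono1)
  also have "\<dots> = 4 ^ (2*n div 3) * (2*n) ^ (1 + T + P)"
    by (simp only: power_add power_one_right mult.assoc mult.commute mult.left_commute)
  also have "(2*n) ^ (1 + T + P) \<le> (2^B) ^ (1 + T + P)" using B by (intro power_mono) auto
  finally have "(4::nat) ^ n \<le> 4 ^ (2*n div 3) * (2^B) ^ (1 + T + P)" by simp
  moreover have "(4::nat) ^ n = 2 ^ (2*n)" by (simp add: power_mult)
  moreover have "(4::nat) ^ (2*n div 3) * (2^B) ^ (1 + T + P) = 2 ^ (2*(2*n div 3) + B*(1+T+P))"
    by (simp add: power_mult power_add)
  ultimately have "(2::nat) ^ (2*n) \<le> 2 ^ (2*(2*n div 3) + B*(1+T+P))" by simp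
  hence "2*n \<le> 2*(2*n div 3) + B*(1+T+P)" by simp
  moreover have "3*(2*n div 3) \<le> 2*n" by simp
  ultimately show ?thesis unfolding P_def by linarith
qed
lemma smooth_count:
  fixes Q :: "nat set" and X B :: nat
  assumes fQ: "finite Q" and pQ: "\<forall>q\<in>Q. prime q" and XB: "X < 2 ^ B"
  shows "card {m\<in>{1..X}. \<forall>p. prime p \<and> p dvd m \<longrightarrow> p \<in> Q} \<le> B ^ card Q"
proof -
  let ?S = "{m\<in>{1..X}. \<forall>p. prime p \<and> p dvd m \<longrightarrow> p \<in> Q}"
  let ?g = "\<lambda>e. \<Prod>q\<in>Q. q ^ e q"
  have sub: "?S \<subseteq> ?g ` (PiE Q (\<lambda>_. {..<B}))"
  proof
    fix m assume mS: "m \<in> ?S"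
    hence m0: "m > 0" and mX: "m \<le> X" and mQ: "\<And>p. prime p \<Longrightarrow> p dvd m \<Longrightarrow> p \<in> Q" by auto
    define e where "e = restrict (\<lambda>q. multiplicity q m) Q"
    have eP: "e \<in> PiE Q (\<lambda>_. {..<B})"
    proof -
      have "multiplicity q m < B" if qQ: "q \<in> Q" for q
      proof -
        have qp: "prime q" using pQ qQ by simp
        have "q ^ multiplicity q m \<le> m" using multiplicity_dvd[of q m] m0 by (intro dvd_imp_le) auto
        also have "\<dots> < 2 ^ B" using mX XB by linarith
        also have "(2::nat) ^ B \<le> q ^ B" using prime_ge_2_nat[OF qp] by (intro power_mono) auto
        finally have "q ^ multiplicity q m < q ^ B" .
        thus ?thesis using prime_gt_1_nat[OF qp] by (intro power_less_imp_less_exp)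
      qed
      thus ?thesis unfolding e_def by auto
    qed
    have "?g e = (\<Prod>q\<in>Q. q ^ multiplicity q m)"
      unfolding e_def by (intro prod.cong) auto
    also have "\<dots> = (\<Prod>q\<in>prime_factors m. q ^ multiplicity q m)"
    proof (rule prod.mono_neutral_right[OF fQ])
      show "prime_factors m \<subseteq> Q" using mQ m0 by (auto simp: in_prime_factors_iff)
      show "\<forall>i\<in>Q - prime_factors m. i ^ multiplicity i m = 1"
      proof
        fix q assume "q \<in> Q - prime_factors m"
        hence "\<not> q dvd m" using pQ m0 by (auto simp: in_prime_factors_iff)
        thus "q ^ multiplicity q m = 1" by (simp add: not_dvd_imp_multiplicity_0)
      qed
    qed
    also have "\<dots> = m" using prod_prime_factors[of m] m0 by simp
    finally have "m = ?g e" by simp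
    thus "m \<in> ?g ` (PiE Q (\<lambda>_. {..<B}))" using eP by (rule image_eqI)
  qed
  have "card ?S \<le> card (?g ` (PiE Q (\<lambda>_. {..<B})))"
    by (rule card_mono[OF _ sub]) (simp add: fQ finite_PiE)
  also have "\<dots> \<le> card (PiE Q (\<lambda>_. {..<B}))" by (rule card_image_le) (simp add: fQ finite_PiE)
  also have "\<dots> = B ^ card Q" using card_PiE[OF fQ, of "\<lambda>_. {..<B}"] by simp
  finally show ?thesis .
qed

lemma ineq_ev: "\<exists>B0. \<forall>B\<ge>B0. 3*B*(1 + 2^((B+1) div 2) + 2*B^(k+1) + k) + 1 \<le> (2::nat)^(B-1)"
proof -
  obtain m1 where m1: "\<And>m. m \<ge> m1 \<Longrightarrow> 33 * m ^ 1 \<le> (2::nat) ^ m" using poly_exp[of 33 1] by blast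
  obtain m2 where m2: "\<And>m. m \<ge> m2 \<Longrightarrow> (8*(10+3*k)) * m ^ (k+2) \<le> (2::nat) ^ m" using poly_exp[of "8*(10+3*k)" "k+2"] by blast
  have "3*B*(1 + 2^((B+1) div 2) + 2*B^(k+1) + k) + 1 \<le> (2::nat)^(B-1)" if B: "B \<ge> 2*m1 + m2 + 20" for B
  proof -
    define h where "h = (B+1) div 2"
    define r where "r = B - 3 - h"
    have hr: "r + h + 3 = B" "B \<le> 2*r + 9" "r \<ge> m1" "r \<ge> 1" using B unfolding r_def h_def by auto
    have "3*B \<le> 33 * r" using hr by linarith
    also have "\<dots> \<le> 2 ^ r" using m1[OF hr(3)] by simp
    finally have b3: "3*B \<le> 2 ^ r" .
    have "3*B*2^h*8 \<le> 2^r * 2^h * 2^3" using b3 by simp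
    also have "\<dots> = (2::nat)^(r+h+3)" by (simp only: power_add)
    also have "\<dots> = 2^B" using hr(1) by simp
    finally have X1: "3*B*2^h*8 \<le> 2^B" .
    have B1: "B \<ge> 1" using B by simp
    define Y where "Y = B^(k+2)"
    have pk: "B \<le> Y" "1 \<le> Y" unfolding Y_def using B1
      by (auto simp: self_le_power)
    have pk3: "3*k*B \<le> 3*k*Y" using pk(1) by (rule mult_le_mono2)
    have "B*B^(k+1) = Y" unfolding Y_def by simp
    hence e: "3*B*(1 + 2*B^(k+1) + k) + 1 = 3*B + 6*Y + 3*k*B + 1" by (simp add: algebra_simps)
    have e2: "(10+3*k) * Y = 10*Y + 3*k*Y" by (simp add: algebra_simps)
    have "3*B*(1 + 2*B^(k+1) + k) + 1 \<le> (10+3*k) * Y" unfolding e e2 using pk pk3 by linarith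
    hence "(3*B*(1 + 2*B^(k+1) + k) + 1) * 8 \<le> ((10+3*k) * Y) * 8" by (rule mult_le_mono1)
    also have "((10+3*k) * Y) * 8 = (8*(10+3*k)) * Y" by (simp only: mult.commute mult.left_commute)
    also have "\<dots> \<le> 2^B" unfolding Y_def using m2[of B] B by simp
    finally have X2: "(3*B*(1 + 2*B^(k+1) + k) + 1) * 8 \<le> 2^B" .
    have "(2::nat)^B = 2^(Suc (B-1))" using B1 by simp
    hence p2: "(2::nat)^B = 2 * 2^(B-1)" by (simp only: power_Suc)
    have "3*B*(1 + 2^h + 2*B^(k+1) + k) + 1 = 3*B*2^h + (3*B*(1 + 2*B^(k+1) + k) + 1)"
      by (simp add: algebra_simps)
    moreover have aux: "\<And>U V W::nat. U*8 \<le> 2*W \<Longrightarrow> V*8 \<le> 2*W \<Longrightarrow> U + V \<le> W" by linarith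
    ultimately show ?thesis using aux[OF X1[unfolded p2] X2[unfolded p2]] unfolding h_def by simp
  qed
  thus ?thesis by blast
qed
lemma cong_to_dvd:
  fixes x y p :: nat
  assumes "[x = y] (mod p)"
  shows "int p dvd (- int x + int y)"
proof -
  have "[int x = int y] (mod int p)" using assms by (simp add: cong_int_iff)
  hence "int p dvd (int x - int y)" by (simp add: cong_iff_dvd_diff)
  hence "int p dvd - (int x - int y)" by (simp only: dvd_minus_iff)
  thus ?thesis by simp
qed

lemma construct:
  fixes Mn :: "nat set" and N R n p0 :: nat
  assumes fM: "finite Mn" and pM: "\<forall>q\<in>Mn. prime q" and twoM: "2 \<notin> Mn"
    and R: "R = N div 2" and n: "n = R div 2" and n2: "n \<ge> 2"
    and p0: "prime p0" "p0 \<notin> insert 2 Mn" "p0 \<le> n"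
    and card: "card {i\<in>{0..<N}. i \<noteq> R \<and> even (nat \<bar>int i - int R\<bar>) \<and>
                  (\<forall>p. prime p \<and> p dvd nat \<bar>int i - int R\<bar> \<longrightarrow> p \<in> insert 2 Mn)}
               \<le> card ({p. prime p \<and> n < p \<and> p \<le> 2*n} - Mn)"
  shows "\<exists>a::int. \<forall>i\<in>{0..<N}. \<exists>p j. prime p \<and> p \<notin> Mn \<and> j \<in> {0..<N} \<and> j \<noteq> i \<and>
           int p dvd a + int i \<and> int p dvd a + int j"
proof -
  define Q where "Q = insert 2 Mn"
  define dd where "dd = (\<lambda>i::nat. nat \<bar>int i - int R\<bar>)"
  define E where "E = {i\<in>{0..<N}. i \<noteq> R \<and> even (dd i) \<and> (\<forall>p. prime p \<and> p dvd dd i \<longrightarrow> p \<in> Q)}"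
  define SP where "SP = {p. prime p \<and> n < p \<and> p \<le> 2*n} - Mn"
  have fE: "finite E" unfolding E_def by simp
  have fSP: "finite SP" unfolding SP_def by simp
  have "card E \<le> card SP" using card unfolding E_def SP_def Q_def dd_def .
  then obtain f where fE_SP: "f ` E \<subseteq> SP" and finj: "inj_on f E"
    using card_le_inj[OF fE fSP] by blast
  define CP where "CP = {p. prime p \<and> p \<le> N \<and> p \<notin> Q \<and> p \<notin> SP}"
  define A where "A = insert 2 (CP \<union> f ` E)"
  define u where "u = (\<lambda>p. if p = 2 then R + 1 else if p \<in> f ` E then inv_into E f p else R)"
  have fA: "finite A" unfolding A_def CP_def using fE by auto
  have pA: "\<forall>p\<in>A. prime p" unfolding A_def CP_def using fE_SP by (auto simp: SP_def)
  have cop: "\<forall>i\<in>A. \<forall>j\<in>A. i \<noteq> j \<longrightarrow> coprime (id i) (id j)"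
    using pA by (auto intro: primes_coprime)
  obtain x where x: "\<forall>p\<in>A. [x = u p] (mod id p)"
    using chinese_remainder_nat[OF fA cop] by blast
  define a where "a = - int x"
  have key: "int p dvd a + int (u p)" if "p \<in> A" for p
    using cong_to_dvd[of x "u p" p] x that unfolding a_def by simp
  have SPgt: "p > n" "p \<le> 2*n" "prime p" "p \<notin> Mn" if "p \<in> SP" for p using that unfolding SP_def by auto
  have R2n: "R \<le> 2*n+1" "2*n \<le> R" using R n by auto
  have NR: "2*R \<le> N" "N \<le> 2*R+1" using R by auto
  have u2: "u 2 = R + 1" unfolding u_def by simp
  have uCP: "u p = R" if "p \<in> CP" for p
  proof -
    have "p \<noteq> 2" using that unfolding CP_def Q_def by auto
    moreover have "p \<notin> f ` E" using that fE_SP unfolding CP_def by auto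
    ultimately show ?thesis unfolding u_def by simp
  qed
  have uE: "u (f i) = i" if "i \<in> E" for i
  proof -
    have "f i \<in> SP" using that fE_SP by auto
    hence "f i \<noteq> 2" using SPgt n2 by fastforce
    thus ?thesis unfolding u_def using that finj by (simp add: inv_into_f_f)
  qed
  have "\<exists>p j. prime p \<and> p \<notin> Mn \<and> j \<in> {0..<N} \<and> j \<noteq> i \<and> int p dvd a + int i \<and> int p dvd a + int j"
    if i: "i \<in> {0..<N}" for i
  proof (cases "i = R")
    case True
    have p0CP: "p0 \<in> CP"
    proof -
      have "p0 \<notin> SP" using p0(3) SPgt by fastforce
      moreover have "p0 \<le> N" using p0(3) R2n NR by linarith
      ultimately show ?thesis using p0 unfolding CP_def Q_def by auto
    qed
    hence "p0 \<in> A" unfolding A_def by auto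
    hence d: "int p0 dvd a + int R" using key[of p0] uCP[OF p0CP] by simp
    have j: "R - p0 \<in> {0..<N}" "R - p0 \<noteq> i" using True p0 R2n NR prime_gt_0_nat[OF p0(1)] by auto
    have "int (R - p0) = int R - int p0" using p0(3) R2n by simp
    hence e: "a + int (R - p0) = (a + int R) - int p0" by simp
    have "int p0 dvd a + int (R - p0)" by (subst e) (rule dvd_diff[OF d dvd_refl])
    thus ?thesis using True d j p0 by blast
  next
    case iR: False
    show ?thesis
    proof (cases "odd (dd i)")
      case True
      have "2 \<in> A" unfolding A_def by simp
      hence d2: "2 dvd a + int (R + 1)" using key[of 2] u2 by simp
      have "odd (int i - int R)" using True unfolding dd_def by (simp add: even_nat_iff)
      hence "even (int i - int R - 1)" by simp
      hence "2 dvd (a + int (R + 1)) + (int i - int R - 1)" by (rule dvd_add[OF d2])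
      moreover have "(a + int (R + 1)) + (int i - int R - 1) = a + int i" by simp
      ultimately have di: "2 dvd a + int i" by (simp only:)
      define j where "j = (if i + 2 < N then i + 2 else i - 2)"
      have N4: "N \<ge> 4" using NR R2n n2 by linarith
      have j: "j \<in> {0..<N}" "j \<noteq> i" using i N4 unfolding j_def by auto
      have "int j = int i + 2 \<or> int j = int i - 2" unfolding j_def using i N4 by auto
      hence "a + int j = (a + int i) + 2 \<or> a + int j = (a + int i) - 2" by auto
      hence "2 dvd a + int j"
      proof (elim disjE)
        assume eq: "a + int j = (a + int i) + 2"
        have "2 dvd (a + int i) + 2" by (rule dvd_add[OF di]) simp
        thus ?thesis using eq by (simp only:)
      next
        assume eq: "a + int j = (a + int i) - 2"
        have "2 dvd (a + int i) - 2" by (rule dvd_diff[OF di]) simp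
        thus ?thesis using eq by (simp only:)
      qed
      moreover have "2 \<notin> Mn" by (rule twoM)
      ultimately show ?thesis using di j two_is_prime_nat by (intro exI[of _ "2::nat"] exI[of _ j]) simp
    next
      case ev: False
      show ?thesis
      proof (cases "\<exists>p. prime p \<and> p dvd dd i \<and> p \<notin> Q")
        case True
        then obtain p where p: "prime p" "p dvd dd i" "p \<notin> Q" by blast
        have ddpos: "dd i > 0" using iR unfolding dd_def by simp
        have ddR: "dd i \<le> R" unfolding dd_def using i NR by auto
        have "p \<le> dd i" using p ddpos by (simp add: dvd_imp_le)
        hence pN: "p \<le> N" using ddR NR by linarith
        have "p \<notin> SP"
        proof
          assume pS: "p \<in> SP"
          have "p \<noteq> 2" using p(3) unfolding Q_def by auto
          hence "coprime 2 p" using p(1) by (intro primes_coprime) auto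
          hence "2 * p dvd dd i" using p(2) ev by (intro divides_mult) auto
          hence "2 * p \<le> dd i" using ddpos by (simp add: dvd_imp_le)
          thus False using SPgt[OF pS] ddR R2n by linarith
        qed
        hence pCP: "p \<in> CP" unfolding CP_def using p pN by auto
        hence "p \<in> A" unfolding A_def by auto
        hence dR: "int p dvd a + int R" using key[of p] uCP[OF pCP] by simp
        have "int p dvd int (dd i)" using p(2) by simp
        moreover have "int (dd i) = \<bar>int i - int R\<bar>" unfolding dd_def by simp
        ultimately have "int p dvd int i - int R" by simp
        hence "int p dvd (a + int R) + (int i - int R)" by (rule dvd_add[OF dR])
        moreover have "(a + int R) + (int i - int R) = a + int i" by simp
        ultimately have "int p dvd a + int i" by (simp only:)
        moreover have "p \<notin> Mn" using p(3) unfolding Q_def by auto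
        moreover have "R \<in> {0..<N}" "R \<noteq> i" using iR NR R2n n2 by auto
        ultimately show ?thesis using dR p(1) by blast
      next
        case False
        hence iE: "i \<in> E" unfolding E_def Q_def using i iR ev by auto
        define p where "p = f i"
        have pS: "p \<in> SP" unfolding p_def using iE fE_SP by auto
        hence "p \<in> A" unfolding A_def p_def using iE by auto
        hence di: "int p dvd a + int i" using key[of p] uE[OF iE] unfolding p_def by simp
        define j where "j = (if i < R then i + p else i - p)"
        have j: "j \<in> {0..<N}" "j \<noteq> i" "int j = int i + int p \<or> int j = int i - int p"
          using SPgt[OF pS] R2n NR i iR n2 unfolding j_def by auto
        have "a + int j = (a + int i) + int p \<or> a + int j = (a + int i) - int p" using j(3) by auto
        hence "int p dvd a + int j"
        proof (elim disjE)
          assume eq: "a + int j = (a + int i) + int p"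
          have "int p dvd (a + int i) + int p" by (rule dvd_add[OF di]) simp
          thus ?thesis using eq by (simp only:)
        next
          assume eq: "a + int j = (a + int i) - int p"
          have "int p dvd (a + int i) - int p" by (rule dvd_diff[OF di]) simp
          thus ?thesis using eq by (simp only:)
        qed
        thus ?thesis using di j SPgt[OF pS] by blast
      qed
    qed
  qed
  thus ?thesis by blast
qed
lemma E_count:
  fixes Q :: "nat set" and N R :: nat
  assumes NR: "N \<le> 2*R+1"
  shows "card {i\<in>{0..<N}. i \<noteq> R \<and> even (nat \<bar>int i - int R\<bar>) \<and>
                  (\<forall>p. prime p \<and> p dvd nat \<bar>int i - int R\<bar> \<longrightarrow> p \<in> Q)}
         \<le> 2 * card {m\<in>{1..R}. \<forall>p. prime p \<and> p dvd m \<longrightarrow> p \<in> Q}"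
proof -
  let ?E = "{i\<in>{0..<N}. i \<noteq> R \<and> even (nat \<bar>int i - int R\<bar>) \<and>
                  (\<forall>p. prime p \<and> p dvd nat \<bar>int i - int R\<bar> \<longrightarrow> p \<in> Q)}"
  let ?S = "{m\<in>{1..R}. \<forall>p. prime p \<and> p dvd m \<longrightarrow> p \<in> Q}"
  have sub: "?E \<subseteq> (\<lambda>m. R + m) ` ?S \<union> (\<lambda>m. R - m) ` ?S"
  proof
    fix i assume iE: "i \<in> ?E"
    define m where "m = nat \<bar>int i - int R\<bar>"
    have mQ: "\<forall>p. prime p \<and> p dvd m \<longrightarrow> p \<in> Q" using iE unfolding m_def by simp
    have iN: "i < N" "i \<noteq> R" using iE by auto
    show "i \<in> (\<lambda>m. R + m) ` ?S \<union> (\<lambda>m. R - m) ` ?S"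
    proof (cases "R \<le> i")
      case True
      hence "m = i - R" unfolding m_def by simp
      moreover have "m \<in> ?S" using mQ iN NR True \<open>m = i - R\<close> by auto
      ultimately show ?thesis using True by (auto intro!: image_eqI[of i "\<lambda>m. R + m" "i - R"])
    next
      case False
      hence "m = R - i" unfolding m_def by simp
      moreover have "m \<in> ?S" using mQ iN NR False \<open>m = R - i\<close> by auto
      ultimately show ?thesis using False by (auto intro!: image_eqI[of i "\<lambda>m. R - m" "R - i"])
    qed
  qed
  have "card ?E \<le> card ((\<lambda>m. R + m) ` ?S \<union> (\<lambda>m. R - m) ` ?S)"
    by (rule card_mono[OF _ sub]) simp
  also have "\<dots> \<le> card ((\<lambda>m. R + m) ` ?S) + card ((\<lambda>m. R - m) ` ?S)" by (rule card_Un_le)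
  also have "\<dots> \<le> card ?S + card ?S" by (intro add_mono card_image_le) simp_all
  finally show ?thesis by simp
qed

theorem theorem2p1:
  fixes M :: "int set" and k :: nat
  assumes "k \<ge> 1" and "finite M" and "card M = k"
    and "\<forall>q\<in>M. prime q \<and> odd q"
  shows "\<exists>n\<^sub>M :: nat. \<forall>N :: nat. N \<ge> n\<^sub>M \<longrightarrow>
           (\<exists>a :: int. \<forall>i \<in> {0..<N}.
              gcd (a + int i) (\<Prod>j \<in> {0..<N} - {i}. a + int j) \<noteq> 1 \<and>
              (\<exists>p :: int. prime p \<and> p \<notin> M \<and>
                 p dvd gcd (a + int i) (\<Prod>j \<in> {0..<N} - {i}. a + int j)))"
proof -
  note fMi = assms(2) and cM = assms(3) and pMi = assms(4)
  define Mn where "Mn = nat ` M"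
  have fM: "finite Mn" unfolding Mn_def using fMi by simp
  have cMn: "card Mn \<le> k" unfolding Mn_def using card_image_le[OF fMi, of nat] cM by simp
  have pM: "\<forall>q\<in>Mn. prime q" unfolding Mn_def using pMi by auto
  have twoM: "2 \<notin> Mn"
  proof
    assume "2 \<in> Mn"
    then obtain q where q: "q \<in> M" "2 = nat q" unfolding Mn_def by auto
    have "q > 0" using pMi q(1) prime_gt_0_int by blast
    hence "q = 2" using q(2) by simp
    thus False using pMi q(1) by auto
  qed
  have memM: "int p \<in> M \<Longrightarrow> p \<in> Mn" for p unfolding Mn_def by (metis image_eqI nat_int)
  define Q where "Q = insert 2 Mn"
  have fQ: "finite Q" unfolding Q_def using fM by simp
  have pQ: "\<forall>q\<in>Q. prime q" unfolding Q_def using pM by simp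
  have cQ: "card Q \<le> k + 1" unfolding Q_def using card_insert_le_m1 cMn
    by (metis Suc_eq_plus1 card_insert_if fM le_SucI not_less_eq_eq)
  obtain p0 where p0: "prime p0" "p0 > (\<Sum>q\<in>Q. q)" using bigger_prime by blast
  have p0Q: "p0 \<notin> Q"
  proof
    assume "p0 \<in> Q"
    hence "p0 \<le> (\<Sum>q\<in>Q. q)" using fQ by (intro member_le_sum) auto
    thus False using p0 by simp
  qed
  obtain B0 where B0: "\<And>B. B \<ge> B0 \<Longrightarrow> 3*B*(1 + 2^((B+1) div 2) + 2*B^(k+1) + k) + 1 \<le> (2::nat)^(B-1)"
    using ineq_ev[of k] by blast
  define nM where "nM = 4*(p0 + 5 + 2^B0) + 8"
  have ex: "\<exists>a::int. \<forall>i\<in>{0..<N}. \<exists>p j. prime p \<and> p \<notin> Mn \<and> j \<in> {0..<N} \<and> j \<noteq> i \<and>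
           int p dvd a + int i \<and> int p dvd a + int j" if N: "N \<ge> nM" for N
  proof -
    define R where "R = N div 2"
    define n where "n = R div 2"
    have NR: "2*R \<le> N" "N \<le> 2*R+1" "2*n \<le> R" "R \<le> 2*n+1" unfolding R_def n_def by auto
    have nbig: "n \<ge> p0 + 5 + 2^B0"
    proof -
      have aux: "\<And>X N R n::nat. 4*X + 8 \<le> N \<Longrightarrow> N \<le> 2*R+1 \<Longrightarrow> R \<le> 2*n+1 \<Longrightarrow> X \<le> n" by linarith
      show ?thesis using aux[of "p0 + 5 + 2^B0" N R n] N NR unfolding nM_def by simp
    qed
    obtain B' where B': "2^B' \<le> 2*n+1" "2*n+1 < (2::nat)^(B'+1)"
      using ex_power_ivl1[of 2 "2*n+1"] by auto
    define B where "B = B' + 1"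
    have B2n: "2*n < 2^B" "R < 2^B" using B' NR unfolding B_def by auto
    have "(2::nat)^B0 < 2^B" using nbig B2n by linarith
    hence BB0: "B \<ge> B0" by (simp add: power_strict_increasing_iff)
    have B1: "B \<ge> 1" unfolding B_def by simp
    define T where "T = (2::nat)^((B+1) div 2)"
    have "(2::nat)^B \<le> 2^(2*((B+1) div 2))" by (intro power_increasing) auto
    also have "\<dots> = T*T" unfolding T_def by (simp only: mult_2 power_add)
    finally have TT: "2*n < T*T" using B2n by linarith
    define P where "P = card {p. prime p \<and> n < p \<and> p \<le> 2*n}"
    have ch: "2*n \<le> 3*B*(1 + T + P)" unfolding P_def using cheb[of n B T] nbig B2n TT by simp
    have "3*B*(1 + T + 2*B^(k+1) + k) + 1 \<le> 2^(B-1)" using B0[OF BB0] unfolding T_def by simp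
    also have "(2::nat)^(B-1) \<le> 2*n+1" using B' unfolding B_def by simp
    finally have h1: "3*B*(1 + T + 2*B^(k+1) + k) \<le> 2*n" by simp
    have h1': "3*B*(1 + T + (2*B^(k+1) + k)) \<le> 2*n" using h1 by (simp only: add.assoc)
    have "3*B*(1 + T + (2*B^(k+1) + k)) \<le> 3*B*(1 + T + P)" using h1' ch by (rule le_trans)
    hence "1 + T + (2*B^(k+1) + k) \<le> 1 + T + P" using B1 by (simp only: mult_le_cancel1)
    hence Pbig: "2*B^(k+1) + k \<le> P" by simp
    define SP where "SP = {p. prime p \<and> n < p \<and> p \<le> 2*n} - Mn"
    have "P - card Mn \<le> card SP" unfolding P_def SP_def by (rule diff_card_le_card_Diff[OF fM])
    hence cSP: "2*B^(k+1) \<le> card SP" using Pbig cMn by linarith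
    have "card {i\<in>{0..<N}. i \<noteq> R \<and> even (nat \<bar>int i - int R\<bar>) \<and>
                  (\<forall>p. prime p \<and> p dvd nat \<bar>int i - int R\<bar> \<longrightarrow> p \<in> Q)}
         \<le> 2 * card {m\<in>{1..R}. \<forall>p. prime p \<and> p dvd m \<longrightarrow> p \<in> Q}"
      using E_count NR by blast
    also have "card {m\<in>{1..R}. \<forall>p. prime p \<and> p dvd m \<longrightarrow> p \<in> Q} \<le> B ^ card Q"
      using smooth_count[OF fQ pQ B2n(2)] .
    also have "B ^ card Q \<le> B ^ (k+1)" using B1 cQ by (intro power_increasing) auto
    finally have cE: "card {i\<in>{0..<N}. i \<noteq> R \<and> even (nat \<bar>int i - int R\<bar>) \<and>
                  (\<forall>p. prime p \<and> p dvd nat \<bar>int i - int R\<bar> \<longrightarrow> p \<in> insert 2 Mn)} \<le> card SP"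
      using cSP unfolding Q_def by simp
    show ?thesis
      using construct[OF fM pM twoM R_def n_def _ p0(1) _ _ cE[unfolded SP_def]] nbig p0Q
      unfolding Q_def by simp
  qed
  have "\<forall>N. N \<ge> nM \<longrightarrow> (\<exists>a :: int. \<forall>i \<in> {0..<N}.
              gcd (a + int i) (\<Prod>j \<in> {0..<N} - {i}. a + int j) \<noteq> 1 \<and>
              (\<exists>p :: int. prime p \<and> p \<notin> M \<and>
                 p dvd gcd (a + int i) (\<Prod>j \<in> {0..<N} - {i}. a + int j)))"
  proof (intro allI impI)
    fix N assume N: "N \<ge> nM"
    obtain a where a: "\<forall>i\<in>{0..<N}. \<exists>p j. prime p \<and> p \<notin> Mn \<and> j \<in> {0..<N} \<and> j \<noteq> i \<and>
           int p dvd a + int i \<and> int p dvd a + int j" using ex[OF N] by blast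
    have hi: "gcd (a + int i) (\<Prod>j \<in> {0..<N} - {i}. a + int j) \<noteq> 1 \<and>
              (\<exists>p :: int. prime p \<and> p \<notin> M \<and>
                 p dvd gcd (a + int i) (\<Prod>j \<in> {0..<N} - {i}. a + int j))" if i: "i \<in> {0..<N}" for i
    proof -
      obtain p j where pj: "prime p" "p \<notin> Mn" "j \<in> {0..<N}" "j \<noteq> i"
        "int p dvd a + int i" "int p dvd a + int j" using a i by blast
      have "a + int j dvd (\<Prod>j \<in> {0..<N} - {i}. a + int j)" using pj(3,4) by (intro dvd_prodI) auto
      hence "int p dvd (\<Prod>j \<in> {0..<N} - {i}. a + int j)" using pj(6) by (rule dvd_trans[rotated])
      hence g: "int p dvd gcd (a + int i) (\<Prod>j \<in> {0..<N} - {i}. a + int j)"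
        using pj(5) by (intro gcd_greatest)
      have pp: "prime (int p)" using pj(1) by simp
      have "int p \<notin> M" using pj(2) memM by blast
      moreover have "gcd (a + int i) (\<Prod>j \<in> {0..<N} - {i}. a + int j) \<noteq> 1"
      proof
        assume "gcd (a + int i) (\<Prod>j \<in> {0..<N} - {i}. a + int j) = 1"
        hence "int p dvd 1" using g by simp
        thus False using not_prime_unit pp by blast
      qed
      ultimately show ?thesis using g pp by blast
    qed
    show "\<exists>a :: int. \<forall>i \<in> {0..<N}.
              gcd (a + int i) (\<Prod>j \<in> {0..<N} - {i}. a + int j) \<noteq> 1 \<and>
              (\<exists>p :: int. prime p \<and> p \<notin> M \<and>
                 p dvd gcd (a + int i) (\<Prod>j \<in> {0..<N} - {i}. a + int j))"
      by (rule exI[of _ a], rule ballI, erule hi)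
  qed
  thus ?thesis by blast
qed
end
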